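(* Consider the unit-cost Correlated Pandora's Problem (all $c_i=1$). For any $k\le 4$ and any scenario $v$, the objective of $k$-Delayed Activation with Discrete-Time Poisson Rounding is at most $\alpha_{i^*}+(k+1)v_{i^*}$, where $i^*=\arg\min_{i\in[n]}\{\alpha_i+kv_i\}$.
   Context: Boxes $[n]$ with unit opening costs and volumes $v_i\ge 0$ (scenario $v$). Let $x_i(t)\ge 0$ ($i,t\in[n]$) satisfy $\sum_i x_i(t)\le 1$ for all $t$, and $\bar x_i(t)=\frac1t\sum_{t'=1}^{\min\{t,n\}}x_i(t')$. Discrete-Time Poisson Rounding: independently at each step $\tau=1,2,\dots$, sample box $i$ with probability $\bar x_i(\lceil\tau/2\rceil)$ (no box with the remaining probability); $\alpha_i$ is the first step at which box $i$ is sampled; all $\alpha_i$ are sampled in advance. $k$-Delayed Activation: open the boxes one per unit time step in ascending order of $\alpha_i$; stop after time step $\min_i(\alpha_i+\lfloor kv_i\rfloor)$ (or when all boxes are opened) and take the opened box of minimum volume; the objective is the number of boxes opened plus the taken volume. *)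

theory Defs
  imports Complex_Main
begin

text \<open>Boxes are 1..n. The LP solution is x i t (box i, time t), for i,t in 1..n.\<close>

definition xbar :: "nat \<Rightarrow> (nat \<Rightarrow> nat \<Rightarrow> real) \<Rightarrow> nat \<Rightarrow> nat \<Rightarrow> real" where
  "xbar n x i t = (1 / real t) * (\<Sum>t'=1..min t n. x i t')"

text \<open>A realization of Discrete-Time Poisson Rounding: s tau is the box sampled at step tau
  (None = no box). Only outcomes of positive probability are allowed at every step.\<close>
definition valid_path :: "nat \<Rightarrow> (nat \<Rightarrow> nat \<Rightarrow> real) \<Rightarrow> (nat \<Rightarrow> nat option) \<Rightarrow> bool" where
  "valid_path n x s \<longleftrightarrow>
     (\<forall>tau\<ge>1. (\<forall>i. s tau = Some i \<longrightarrow> i \<in> {1..n} \<and> xbar n x i ((tau + 1) div 2) > 0) \<and>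
              (s tau = None \<longrightarrow> (\<Sum>i=1..n. xbar n x i ((tau + 1) div 2)) < 1))"

definition sampled :: "(nat \<Rightarrow> nat option) \<Rightarrow> nat \<Rightarrow> bool" where
  "sampled s i \<longleftrightarrow> (\<exists>tau\<ge>1. s tau = Some i)"

text \<open>alpha i: first step at which box i is sampled (meaningful when sampled s i).\<close>
definition alpha :: "(nat \<Rightarrow> nat option) \<Rightarrow> nat \<Rightarrow> nat" where
  "alpha s i = (LEAST tau. tau \<ge> 1 \<and> s tau = Some i)"

definition sampled_boxes :: "nat \<Rightarrow> (nat \<Rightarrow> nat option) \<Rightarrow> nat set" where
  "sampled_boxes n s = {i \<in> {1..n}. sampled s i}"

definition stop_time :: "nat \<Rightarrow> real \<Rightarrow> (nat \<Rightarrow> real) \<Rightarrow> (nat \<Rightarrow> nat option) \<Rightarrow> nat" where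
  "stop_time n k v s = Min ((\<lambda>i. alpha s i + nat \<lfloor>k * v i\<rfloor>) ` sampled_boxes n s)"

text \<open>Boxes opened: one per time step in ascending order of alpha, through the stopping time
  (or until all boxes are opened).\<close>
definition opened :: "nat \<Rightarrow> real \<Rightarrow> (nat \<Rightarrow> real) \<Rightarrow> (nat \<Rightarrow> nat option) \<Rightarrow> nat set" where
  "opened n k v s = {i \<in> sampled_boxes n s.
      card {j \<in> sampled_boxes n s. alpha s j \<le> alpha s i} \<le> stop_time n k v s}"

definition objective :: "nat \<Rightarrow> real \<Rightarrow> (nat \<Rightarrow> real) \<Rightarrow> (nat \<Rightarrow> nat option) \<Rightarrow> real" where
  "objective n k v s = real (card (opened n k v s)) + Min (v ` opened n k v s)"

end

theory Submission
  imports Defs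
begin

lemma alpha_prop:
  assumes "sampled s i"
  shows "alpha s i \<ge> 1 \<and> s (alpha s i) = Some i"
proof -
  from assms obtain tau where "tau \<ge> 1 \<and> s tau = Some i" unfolding sampled_def by blast
  then show ?thesis unfolding alpha_def by (rule LeastI)
qed

theorem lemmaA2:
  fixes n :: nat and x :: "nat \<Rightarrow> nat \<Rightarrow> real" and v :: "nat \<Rightarrow> real"
    and k :: real and s :: "nat \<Rightarrow> nat option" and istar :: nat
  assumes x_nonneg: "\<And>i t. i \<in> {1..n} \<Longrightarrow> t \<in> {1..n} \<Longrightarrow> x i t \<ge> 0"
    and x_sum: "\<And>t. t \<in> {1..n} \<Longrightarrow> (\<Sum>i=1..n. x i t) \<le> 1"
    and v_nonneg: "\<And>i. i \<in> {1..n} \<Longrightarrow> v i \<ge> 0"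
    and k_nonneg: "0 \<le> k" and k_le: "k \<le> 4"
    and path: "valid_path n x s"
    and some_sampled: "sampled_boxes n s \<noteq> {}"
    and istar: "istar \<in> sampled_boxes n s"
    and istar_min: "\<And>j. j \<in> sampled_boxes n s \<Longrightarrow>
                      real (alpha s istar) + k * v istar \<le> real (alpha s j) + k * v j"
  shows "objective n k v s \<le> real (alpha s istar) + (k + 1) * v istar"
proof -
  define S where "S = sampled_boxes n s"
  define T where "T = stop_time n k v s"
  define OB where "OB = opened n k v s"
  have finS: "finite S" unfolding S_def sampled_boxes_def by simp
  have Ssub: "S \<subseteq> {1..n}" unfolding S_def sampled_boxes_def by auto
  have ap: "\<And>j. j \<in> S \<Longrightarrow> alpha s j \<ge> 1 \<and> s (alpha s j) = Some j"
    using alpha_prop unfolding S_def sampled_boxes_def by blast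
  have inj: "inj_on (alpha s) S"
    by (rule inj_onI) (metis ap option.inject)
  have istS: "istar \<in> S" using istar S_def by simp
  have kv: "\<And>j. j \<in> S \<Longrightarrow> k * v j \<ge> 0"
    using Ssub v_nonneg k_nonneg by (meson subsetD mult_nonneg_nonneg)
  have T_le: "T \<le> alpha s istar + nat \<lfloor>k * v istar\<rfloor>"
    unfolding T_def stop_time_def using finS istS S_def by (intro Min_le) auto
  have T_ge: "alpha s istar \<le> T"
  proof -
    have "alpha s istar \<le> alpha s j + nat \<lfloor>k * v j\<rfloor>" if j: "j \<in> S" for j
    proof -
      have "real (alpha s istar) \<le> real (alpha s j) + k * v j"
        using istar_min[of j] j S_def kv[OF istS] by simp
      moreover have "k * v j < real_of_int \<lfloor>k * v j\<rfloor> + 1" by linarith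
      moreover have "real_of_int \<lfloor>k * v j\<rfloor> = real (nat \<lfloor>k * v j\<rfloor>)"
        using kv[OF j] by simp
      ultimately have "real (alpha s istar) < real (alpha s j + nat \<lfloor>k * v j\<rfloor>) + 1" by simp
      then show ?thesis by linarith
    qed
    then show ?thesis unfolding T_def stop_time_def using finS istS S_def
      by (subst Min_ge_iff) auto
  qed
  have rank_le: "card {j \<in> S. alpha s j \<le> alpha s istar} \<le> alpha s istar"
  proof -
    have "card {j \<in> S. alpha s j \<le> alpha s istar} = card (alpha s ` {j \<in> S. alpha s j \<le> alpha s istar})"
      using inj by (metis (no_types, lifting) card_image inj_on_subset mem_Collect_eq subsetI)
    also have "\<dots> \<le> card {1..alpha s istar}"
      using ap by (intro card_mono) auto
    finally show ?thesis by simp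
  qed
  have istO: "istar \<in> OB"
    unfolding OB_def opened_def using istS rank_le T_ge S_def T_def by auto
  have finO: "finite OB" unfolding OB_def opened_def using finS S_def by auto
  have OBS: "OB \<subseteq> S" unfolding OB_def opened_def S_def by auto
  have cardO: "card OB \<le> T"
  proof -
    have ne: "alpha s ` OB \<noteq> {}" using istO by auto
    obtain m where m: "m \<in> OB" "alpha s m = Max (alpha s ` OB)"
      using Max_in[OF finite_imageI[OF finO] ne] by auto
    have "OB \<subseteq> {j \<in> S. alpha s j \<le> alpha s m}"
      using OBS m finO by auto
    then have "card OB \<le> card {j \<in> S. alpha s j \<le> alpha s m}"
      using finS by (intro card_mono) auto
    also have "\<dots> \<le> T" using m(1) unfolding OB_def opened_def S_def T_def by auto
    finally show ?thesis .
  qed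
  have minv: "Min (v ` OB) \<le> v istar" using finO istO by (intro Min_le) auto
  have "real (nat \<lfloor>k * v istar\<rfloor>) \<le> k * v istar"
    using kv[OF istS] by simp
  then have "real (card OB) \<le> real (alpha s istar) + k * v istar"
    using cardO T_le by linarith
  then have "objective n k v s \<le> real (alpha s istar) + k * v istar + v istar"
    unfolding objective_def OB_def[symmetric] using minv by linarith
  then show ?thesis by (simp add: algebra_simps)
qed

end
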